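(* Let $i,j,k$ be integers with $i\ge j\ge 0$ and $k\ge 1-j$. Then (a) $\displaystyle\sum_{r=j}^{i}(-1)^{i-r}\binom{r+k-1}{r-j}\,b_{i,r,k}=b_{i,j,0}$; (b) $\displaystyle\sum_{r=j}^{i}(-1)^{i-r}\binom{r+k-1}{r-j}\,b_{i,r,0}=b_{i,j,k}$.
   Context: For integers $i\ge0$, $j\ge0$ and real $k$, $b_{i,j,k}=\sum_{r=0}^{j}\binom{j}{r}(-1)^{j-r}(r+k)^i$, with the convention $0^0=1$. *)

theory Defs
  imports Complex_Main
begin

text \<open>b i j k = sum_{r=0}^{j} binom(j,r) (-1)^(j-r) (r+k)^i, for naturals i, j and real k.
  Isabelle's power satisfies 0^0 = 1, matching the paper's convention.\<close>
definition b :: "nat \<Rightarrow> nat \<Rightarrow> real \<Rightarrow> real" where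
  "b i j k = (\<Sum>r = 0..j. real (j choose r) * (-1) ^ (j - r) * (real r + k) ^ i)"

end

theory Submission
  imports Defs
begin

lemma b_def': "b i j y = (\<Sum>r\<le>j. real (j choose r) * (-1) ^ (j - r) * (real r + y) ^ i)"
  unfolding b_def by (simp add: atLeast0AtMost)

lemma b_Suc: "b i (Suc j) y = b i j (y+1) - b i j y"
proof -
  have A: "b i (Suc j) y = (-1) ^ (Suc j) * y ^ i
      + (\<Sum>r\<le>j. real (j choose r) * (-1) ^ (j - r) * (real r + (y+1)) ^ i)
      + (\<Sum>r\<le>j. real (j choose Suc r) * (-1) ^ (j - r) * (real (Suc r) + y) ^ i)"
    unfolding b_def' sum.atMost_Suc_shift
    by (simp add: sum.distrib algebra_simps)
  have "- b i j y = (\<Sum>r\<le>j. real (j choose r) * (-1) ^ (Suc j - r) * (real r + y) ^ i)"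
    unfolding b_def' sum_negf[symmetric]
    by (rule sum.cong) (auto simp: Suc_diff_le)
  also have "\<dots> = (\<Sum>r\<le>Suc j. real (j choose r) * (-1) ^ (Suc j - r) * (real r + y) ^ i)"
    by simp
  also have "\<dots> = (-1) ^ (Suc j) * y ^ i
      + (\<Sum>r\<le>j. real (j choose Suc r) * (-1) ^ (j - r) * (real (Suc r) + y) ^ i)"
    unfolding sum.atMost_Suc_shift by simp
  finally have C: "- b i j y = (-1) ^ (Suc j) * y ^ i
      + (\<Sum>r\<le>j. real (j choose Suc r) * (-1) ^ (j - r) * (real (Suc r) + y) ^ i)" .
  have B: "b i j (y+1) = (\<Sum>r\<le>j. real (j choose r) * (-1) ^ (j - r) * (real r + (y+1)) ^ i)"
    by (rule b_def')
  show ?thesis using A B C by linarith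
qed

lemma b_pow_Suc: "b (Suc m) (Suc j) x = real (Suc j) * b m j (x+1) + x * b m (Suc j) x"
proof -
  have "b (Suc m) (Suc j) x = (\<Sum>r\<le>Suc j. real (Suc j choose r) * (-1) ^ (Suc j - r) * real r * (real r + x) ^ m)
     + x * b m (Suc j) x"
    unfolding b_def' sum_distrib_left sum.distrib[symmetric]
    by (rule sum.cong) (auto simp: algebra_simps)
  also have "(\<Sum>r\<le>Suc j. real (Suc j choose r) * (-1) ^ (Suc j - r) * real r * (real r + x) ^ m)
     = (\<Sum>r\<le>j. real (Suc r * (Suc j choose Suc r)) * (-1) ^ (j - r) * (real r + (x+1)) ^ m)"
    unfolding sum.atMost_Suc_shift by (simp add: algebra_simps)
  also have "\<dots> = real (Suc j) * b m j (x+1)"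
    unfolding Suc_times_binomial b_def' sum_distrib_left
    by (rule sum.cong) (auto simp: algebra_simps)
  finally show ?thesis .
qed

lemma b_zero: "m < j \<Longrightarrow> b m j x = 0"
proof (induction m arbitrary: j x)
  case 0
  then obtain j' where j: "j = Suc j'" by (cases j) auto
  show ?case unfolding j b_Suc by (simp add: b_def)
next
  case (Suc m)
  then obtain j' where j: "j = Suc j'" by (cases j) auto
  show ?case using Suc unfolding j b_pow_Suc by simp
qed

lemma b_sym: "b i j (- x - real j) = (-1) ^ (i + j) * b i j x"
proof -
  have "b i j (- x - real j) = (\<Sum>r = 0..j. real (j choose (j + 0 - r)) * (-1) ^ (j - (j + 0 - r)) * (real (j + 0 - r) + (- x - real j)) ^ i)"
    unfolding b_def by (rule sum.atLeastAtMost_rev)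
  also have "\<dots> = (\<Sum>r = 0..j. (-1) ^ (i + j) * (real (j choose r) * (-1) ^ (j - r) * (real r + x) ^ i))"
  proof (rule sum.cong)
    fix r assume r: "r \<in> {0..j}"
    then have r': "r \<le> j" by simp
    have e1: "j choose (j + 0 - r) = j choose r" using binomial_symmetric[OF r'] by simp
    have e2: "real (j + 0 - r) + (- x - real j) = - (real r + x)" using r' by (simp add: of_nat_diff)
    have e3: "(-1::real) ^ (j - (j + 0 - r)) = (-1) ^ (i + j) * (-1) ^ (j - r) * (-1) ^ i"
    proof -
      have ex: "i + j + (j - r) + i = 2 * (i + j - r) + r" using r' by arith
      have "(-1::real) ^ (i + j) * (-1) ^ (j - r) * (-1) ^ i = (-1) ^ (i + j + (j - r) + i)"
        by (simp add: power_add)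
      also have "\<dots> = (-1) ^ (2 * (i + j - r) + r)" by (simp only: ex)
      also have "\<dots> = (-1) ^ r" by (simp add: power_add power_mult)
      finally have "(-1::real) ^ (i + j) * (-1) ^ (j - r) * (-1) ^ i = (-1) ^ r" .
      moreover have "j - (j + 0 - r) = r" using r' by simp
      ultimately show ?thesis by simp
    qed
    show "real (j choose (j + 0 - r)) * (-1) ^ (j - (j + 0 - r)) * (real (j + 0 - r) + (- x - real j)) ^ i
        = (-1) ^ (i + j) * (real (j choose r) * (-1) ^ (j - r) * (real r + x) ^ i)"
      proof -
        have e4: "(- (real r + x)) ^ i = (-1) ^ i * (real r + x) ^ i" by (rule power_minus)
        have e5: "(-1::real) ^ i * (-1) ^ i = 1" by (simp add: power_mult_distrib[symmetric])
        have "real (j choose r) * ((-1) ^ (i + j) * (-1) ^ (j - r) * (-1) ^ i) * ((-1) ^ i * (real r + x) ^ i)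
           = (-1) ^ (i + j) * (real (j choose r) * (-1) ^ (j - r) * (real r + x) ^ i) * ((-1::real) ^ i * (-1) ^ i)"
          by (simp only: ac_simps)
        then show ?thesis unfolding e1 e2 e3 e4 e5 by simp
      qed
  qed simp
  also have "\<dots> = (-1) ^ (i + j) * b i j x"
    unfolding b_def sum_distrib_left ..
  finally show ?thesis .
qed

lemma b_back:
  "i \<le> j + N \<Longrightarrow>
   (\<Sum>m\<le>N. (-1) ^ m * ((real a + real m - 1) gchoose m) * b i (j + m) x) = b i j (x - real a)"
proof (induction a arbitrary: j N)
  case 0
  have "(\<Sum>m\<le>N. (-1) ^ m * ((real 0 + real m - 1) gchoose m) * b i (j + m) x)
      = b i j x + (\<Sum>m<N. (-1) ^ Suc m * ((real m) gchoose Suc m) * b i (j + Suc m) x)"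
    unfolding sum.atMost_shift by simp
  also have "(\<Sum>m<N. (-1) ^ Suc m * ((real m) gchoose Suc m) * b i (j + Suc m) x) = 0"
    by (rule sum.neutral) (simp add: binomial_gbinomial[symmetric])
  finally show ?case by simp
next
  case (Suc a)
  show ?case using Suc.prems
  proof (induction "Suc i - j" arbitrary: j N rule: less_induct)
    case less
    show ?case
    proof (cases "i < j")
      case True
      then show ?thesis by (simp add: b_zero)
    next
      case False
      have z: "b i (j + Suc N) x = 0" using less.prems by (simp add: b_zero)
      have IH1: "(\<Sum>m\<le>N. (-1) ^ m * ((real (Suc a) + real m - 1) gchoose m) * b i (Suc j + m) x)
          = b i (Suc j) (x - real (Suc a))"
        using less.hyps[of "Suc j" N] False less.prems by simp
      have IH0: "(\<Sum>m\<le>N. (-1) ^ m * ((real a + real m - 1) gchoose m) * b i (j + m) x)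
          = b i j (x - real a)"
        using Suc.IH less.prems by simp
      have "(\<Sum>m\<le>N. (-1) ^ m * ((real (Suc a) + real m - 1) gchoose m) * b i (j + m) x)
          = (\<Sum>m\<le>Suc N. (-1) ^ m * ((real (Suc a) + real m - 1) gchoose m) * b i (j + m) x)"
        using z by simp
      also have "\<dots> = b i j x + (\<Sum>m\<le>N. (-1) ^ Suc m * ((real (Suc a) + real (Suc m) - 1) gchoose Suc m) * b i (j + Suc m) x)"
        unfolding sum.atMost_Suc_shift by simp
      also have "(\<Sum>m\<le>N. (-1) ^ Suc m * ((real (Suc a) + real (Suc m) - 1) gchoose Suc m) * b i (j + Suc m) x)
          = - (\<Sum>m\<le>N. (-1) ^ m * ((real (Suc a) + real m - 1) gchoose m) * b i (Suc j + m) x)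
            + (\<Sum>m\<le>N. (-1) ^ Suc m * ((real a + real (Suc m) - 1) gchoose Suc m) * b i (j + Suc m) x)"
        unfolding sum_negf[symmetric] sum.distrib[symmetric]
      proof (rule sum.cong)
        fix m
        have "real (Suc a) + real (Suc m) - 1 = (real a + real m) + 1" by simp
        then have "(real (Suc a) + real (Suc m) - 1) gchoose Suc m
            = ((real a + real m) gchoose m) + ((real a + real m) gchoose Suc m)"
          by (simp only: gbinomial_Suc_Suc)
        moreover have "real (Suc a) + real m - 1 = real a + real m" by simp
        moreover have "real a + real (Suc m) - 1 = real a + real m" by simp
        ultimately show "(-1) ^ Suc m * ((real (Suc a) + real (Suc m) - 1) gchoose Suc m) * b i (j + Suc m) x
          = - ((-1) ^ m * ((real (Suc a) + real m - 1) gchoose m) * b i (Suc j + m) x)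
            + (-1) ^ Suc m * ((real a + real (Suc m) - 1) gchoose Suc m) * b i (j + Suc m) x"
          by (simp add: algebra_simps)
      qed simp
      also have "b i j x + (- (\<Sum>m\<le>N. (-1) ^ m * ((real (Suc a) + real m - 1) gchoose m) * b i (Suc j + m) x)
            + (\<Sum>m\<le>N. (-1) ^ Suc m * ((real a + real (Suc m) - 1) gchoose Suc m) * b i (j + Suc m) x))
          = (\<Sum>m\<le>Suc N. (-1) ^ m * ((real a + real m - 1) gchoose m) * b i (j + m) x)
            - b i (Suc j) (x - real (Suc a))"
        unfolding IH1 sum.atMost_Suc_shift by simp
      also have "(\<Sum>m\<le>Suc N. (-1) ^ m * ((real a + real m - 1) gchoose m) * b i (j + m) x)
          = b i j (x - real a)" using IH0 z by simp
      also have "b i j (x - real a) - b i (Suc j) (x - real (Suc a)) = b i j (x - real (Suc a))"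
        using b_Suc[of i j "x - real (Suc a)"] by simp
      finally show ?thesis .
    qed
  qed
qed

lemma sum_reindex_j: "(j::nat) \<le> i \<Longrightarrow> sum f {j..i} = (\<Sum>m\<le>i - j. f (j + m))"
proof -
  assume h: "j \<le> i"
  have "sum f {0 + j..(i - j) + j} = (\<Sum>m = 0..i - j. f (m + j))"
    by (rule sum.shift_bounds_cl_nat_ivl)
  then show ?thesis using h by (simp add: atLeast0AtMost add.commute)
qed

lemma general:
  fixes i j :: nat and k :: int and x :: real
  assumes "j \<le> i" and "k \<ge> 1 - int j"
  shows "(\<Sum>r = j..i. (-1) ^ (i - r) * (real_of_int (int r + k - 1) gchoose (r - j)) * b i r x)
    = (-1) ^ (i - j) * b i j (x - (real_of_int k + real j))"
proof -
  define a where "a = nat (k + int j)"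
  have ra: "real a = real_of_int k + real j" unfolding a_def using assms(2) by simp
  have "(\<Sum>r = j..i. (-1) ^ (i - r) * (real_of_int (int r + k - 1) gchoose (r - j)) * b i r x)
     = (\<Sum>m\<le>i - j. (-1) ^ (i - (j + m)) * (real_of_int (int (j + m) + k - 1) gchoose (j + m - j)) * b i (j + m) x)"
    using assms(1) by (rule sum_reindex_j)
  also have "\<dots> = (\<Sum>m\<le>i - j. (-1) ^ (i - j) * ((-1) ^ m * ((real a + real m - 1) gchoose m) * b i (j + m) x))"
  proof (rule sum.cong)
    fix m assume "m \<in> {..i - j}"
    then have m: "m \<le> i - j" by simp
    have ex: "i - (j + m) + 2 * m = (i - j) + m" using m assms(1) by arith
    have s: "(-1::real) ^ (i - (j + m)) = (-1) ^ (i - j) * (-1) ^ m"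
    proof -
      have "(-1::real) ^ (i - (j + m)) = (-1) ^ (i - (j + m) + 2 * m)" by (simp add: power_add power_mult)
      also have "\<dots> = (-1) ^ (i - j) * (-1) ^ m" by (simp only: ex power_add)
      finally show ?thesis .
    qed
    have g: "real_of_int (int (j + m) + k - 1) = real a + real m - 1" using ra by simp
    show "(-1) ^ (i - (j + m)) * (real_of_int (int (j + m) + k - 1) gchoose (j + m - j)) * b i (j + m) x
       = (-1) ^ (i - j) * ((-1) ^ m * ((real a + real m - 1) gchoose m) * b i (j + m) x)"
      unfolding s g by simp
  qed simp
  also have "\<dots> = (-1) ^ (i - j) * b i j (x - real a)"
    unfolding sum_distrib_left[symmetric] using b_back[of i j "i - j" a x] assms(1) by simp
  finally show ?thesis unfolding ra .
qed

theorem mainTheorem13: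
  fixes i j :: nat and k :: int
  assumes "j \<le> i" and "k \<ge> 1 - int j"
  shows "(\<Sum>r = j..i. (-1) ^ (i - r) * (real_of_int (int r + k - 1) gchoose (r - j))
            * b i r (real_of_int k)) = b i j 0
       \<and> (\<Sum>r = j..i. (-1) ^ (i - r) * (real_of_int (int r + k - 1) gchoose (r - j))
            * b i r 0) = b i j (real_of_int k)"
proof
  have pp: "(-1::real) ^ (i - j) * (-1) ^ (i + j) = 1"
  proof -
    have ex: "(i - j) + (i + j) = 2 * i" using assms(1) by arith
    have "(-1::real) ^ (i - j) * (-1) ^ (i + j) = (-1) ^ ((i - j) + (i + j))" by (simp add: power_add)
    also have "\<dots> = 1" by (simp only: ex power_mult) simp
    finally show ?thesis .
  qed
  have e1: "real_of_int k - (real_of_int k + real j) = - 0 - real j" by simp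
  show "(\<Sum>r = j..i. (-1) ^ (i - r) * (real_of_int (int r + k - 1) gchoose (r - j))
            * b i r (real_of_int k)) = b i j 0"
    unfolding general[OF assms] e1 b_sym using pp by (simp add: mult.assoc[symmetric])
  have e2: "0 - (real_of_int k + real j) = - real_of_int k - real j" by simp
  show "(\<Sum>r = j..i. (-1) ^ (i - r) * (real_of_int (int r + k - 1) gchoose (r - j))
            * b i r 0) = b i j (real_of_int k)"
    unfolding general[OF assms] e2 b_sym using pp by (simp add: mult.assoc[symmetric])
qed

end
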